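(* For every sequent $\Gamma\Rightarrow\Delta$: if $\Gamma\Rightarrow\Delta$ is provable in $\mathsf{Grz}_\infty$, then $\mathsf{Grz_{Seq}}\vdash\Gamma\Rightarrow\Delta$.
   Context: Formulas are built from $\bot$ and atomic propositions using $\to$ and $\Box$. A sequent is $\Gamma\Rightarrow\Delta$ with $\Gamma,\Delta$ finite multisets of formulas; $\Box\Pi$ denotes the multiset $\{\Box B:B\in\Pi\}$. Common rules: $(\to_L)$ from $\Gamma,B\Rightarrow\Delta$ and $\Gamma\Rightarrow A,\Delta$ infer $\Gamma,A\to B\Rightarrow\Delta$; $(\to_R)$ from $\Gamma,A\Rightarrow B,\Delta$ infer $\Gamma\Rightarrow A\to B,\Delta$; $(\mathsf{refl})$ from $\Gamma,B,\Box B\Rightarrow\Delta$ infer $\Gamma,\Box B\Rightarrow\Delta$. The finite-proof calculus $\mathsf{Grz_{Seq}}$ has initial sequents $\Gamma,A\Rightarrow A,\Delta$ (any $A$) and $\Gamma,\bot\Rightarrow\Delta$, the rules $(\to_L),(\to_R),(\mathsf{refl})$ and $(\Box_{\mathsf{Grz}})$: from $\Box\Pi,\Box(A\to\Box A)\Rightarrow A$ infer $\Gamma,\Box\Pi\Rightarrow\Box A,\Delta$. The calculus $\mathsf{Grz}_\infty$ has initial sequents $\Gamma,p\Rightarrow p,\Delta$ ($p$ atomic) and $\Gamma,\bot\Rightarrow\Delta$, the rules $(\to_L),(\to_R),(\mathsf{refl})$ and $(\Box)$: from left premise $\Gamma,\Box\Pi\Rightarrow A,\Delta$ and right premise $\Box\Pi\Rightarrow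 A$ infer $\Gamma,\Box\Pi\Rightarrow\Box A,\Delta$. Proofs in $\mathsf{Grz}_\infty$ are $\infty$-proofs: possibly infinite trees of sequents built by these rules, with leaves labelled by initial sequents, in which every infinite branch passes through a right premise of $(\Box)$ infinitely often; a sequent is provable if it labels the root of an $\infty$-proof. *)

theory Defs
  imports Main "HOL-Library.Multiset"
begin

datatype 'a fm = Bot | At 'a | Imp "'a fm" "'a fm" | Box "'a fm"

type_synonym 'a sequent = "'a fm multiset \<times> 'a fm multiset"

abbreviation boxes :: "'a fm multiset \<Rightarrow> 'a fm multiset" where
  "boxes \<Pi> \<equiv> image_mset Box \<Pi>"

inductive grz_seq :: "'a fm multiset \<Rightarrow> 'a fm multiset \<Rightarrow> bool" where
  ax: "grz_seq (add_mset A \<Gamma>) (add_mset A \<Delta>)"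
| bot: "grz_seq (add_mset Bot \<Gamma>) \<Delta>"
| impL: "grz_seq (add_mset B \<Gamma>) \<Delta> \<Longrightarrow> grz_seq \<Gamma> (add_mset A \<Delta>)
          \<Longrightarrow> grz_seq (add_mset (Imp A B) \<Gamma>) \<Delta>"
| impR: "grz_seq (add_mset A \<Gamma>) (add_mset B \<Delta>) \<Longrightarrow> grz_seq \<Gamma> (add_mset (Imp A B) \<Delta>)"
| refl: "grz_seq (add_mset B (add_mset (Box B) \<Gamma>)) \<Delta> \<Longrightarrow> grz_seq (add_mset (Box B) \<Gamma>) \<Delta>"
| boxGrz: "grz_seq (add_mset (Box (Imp A (Box A))) (boxes \<Pi>)) {#A#}
          \<Longrightarrow> grz_seq (\<Gamma> + boxes \<Pi>) (add_mset (Box A) \<Delta>)"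

text \<open>Rule labels and single inference steps of Grz_infinity:
  conclusion, rule, list of premises (for (Box): [left premise, right premise]).\<close>
datatype rule = RAx | RBot | RImpL | RImpR | RRefl | RBox

inductive inf_step :: "'a sequent \<Rightarrow> rule \<Rightarrow> 'a sequent list \<Rightarrow> bool" where
  "inf_step (add_mset (At p) \<Gamma>, add_mset (At p) \<Delta>) RAx []"
| "inf_step (add_mset Bot \<Gamma>, \<Delta>) RBot []"
| "inf_step (add_mset (Imp A B) \<Gamma>, \<Delta>) RImpL [(add_mset B \<Gamma>, \<Delta>), (\<Gamma>, add_mset A \<Delta>)]"
| "inf_step (\<Gamma>, add_mset (Imp A B) \<Delta>) RImpR [(add_mset A \<Gamma>, add_mset B \<Delta>)]"
| "inf_step (add_mset (Box B) \<Gamma>, \<Delta>) RRefl [(add_mset B (add_mset (Box B) \<Gamma>), \<Delta>)]"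
| "inf_step (\<Gamma> + boxes \<Pi>, add_mset (Box A) \<Delta>) RBox
     [(\<Gamma> + boxes \<Pi>, add_mset A \<Delta>), (boxes \<Pi>, {#A#})]"

text \<open>An infinity-proof: a (possibly infinite) tree with node set T (positions are lists of
  child indices, root []), node labels lab and rule labels rl, locally correct at every node,
  such that every infinite branch passes through a right premise of (Box) infinitely often.\<close>
definition inf_proof :: "nat list set \<Rightarrow> (nat list \<Rightarrow> 'a sequent) \<Rightarrow> (nat list \<Rightarrow> rule) \<Rightarrow> bool" where
  "inf_proof T lab rl \<longleftrightarrow>
     [] \<in> T \<and>
     (\<forall>w i. w @ [i] \<in> T \<longrightarrow> w \<in> T) \<and>
     (\<forall>w\<in>T. \<exists>ss. inf_step (lab w) (rl w) ss \<and>
                 (\<forall>i. w @ [i] \<in> T \<longleftrightarrow> i < length ss) \<and>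
                 (\<forall>i < length ss. lab (w @ [i]) = ss ! i)) \<and>
     (\<forall>f :: nat \<Rightarrow> nat list. f 0 = [] \<and> (\<forall>n. f (Suc n) \<in> T \<and> (\<exists>i. f (Suc n) = f n @ [i]))
        \<longrightarrow> (\<exists>\<^sub>\<infinity>n. rl (f n) = RBox \<and> f (Suc n) = f n @ [1]))"

definition grz_inf_provable :: "'a fm multiset \<Rightarrow> 'a fm multiset \<Rightarrow> bool" where
  "grz_inf_provable \<Gamma> \<Delta> \<longleftrightarrow> (\<exists>T lab rl. inf_proof T lab rl \<and> lab [] = (\<Gamma>, \<Delta>))"

end

theory Submission
  imports Defs
begin

fun sub :: "'a fm \<Rightarrow> 'a fm set" where
  "sub Bot = {Bot}"
| "sub (At p) = {At p}"
| "sub (Imp A B) = insert (Imp A B) (sub A \<union> sub B)"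
| "sub (Box A) = insert (Box A) (sub A)"

lemma sub_finite: "finite (sub A)"
  by (induction A) auto

lemma sub_self [simp]: "A \<in> sub A"
  by (cases A) auto

lemma sub_trans: "B \<in> sub A \<Longrightarrow> sub B \<subseteq> sub A"
  by (induction A) auto

definition fmls :: "'a sequent \<Rightarrow> 'a fm set" where
  "fmls c = set_mset (fst c) \<union> set_mset (snd c)"

lemma step_sub:
  assumes "inf_step c r ss" "i < length ss"
  shows "fmls (ss ! i) \<subseteq> \<Union>(sub ` fmls c)"
  using assms
proof cases
  case (3 A B \<Gamma> \<Delta>)
  then have "i = 0 \<or> i = 1" using assms(2) by auto
  then show ?thesis using 3 sub_self[of A] sub_self[of B]
    by (fastforce simp: fmls_def)
next
  case (4 \<Gamma> A B \<Delta>)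
  then have "i = 0" using assms(2) by auto
  then show ?thesis using 4 sub_self[of A] sub_self[of B]
    by (fastforce simp: fmls_def)
next
  case (5 B \<Gamma> \<Delta>)
  then have "i = 0" using assms(2) by auto
  then show ?thesis using 5 sub_self[of B]
    by (fastforce simp: fmls_def)
next
  case (6 \<Gamma> \<Pi> A \<Delta>)
  then have "i = 0 \<or> i = 1" using assms(2) by auto
  then show ?thesis using 6 sub_self[of A]
    by (fastforce simp: fmls_def)
qed auto

lemma weakR: "grz_seq \<Gamma> \<Delta> \<Longrightarrow> grz_seq \<Gamma> (add_mset C \<Delta>)"
proof (induction rule: grz_seq.induct)
  case (ax A \<Gamma> \<Delta>)
  then show ?case using grz_seq.ax[of A \<Gamma> "add_mset C \<Delta>"] by (simp add: add_mset_commute)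
next
  case (bot \<Gamma> \<Delta>)
  then show ?case by (rule grz_seq.bot)
next
  case (impL B \<Gamma> \<Delta> A)
  then show ?case using grz_seq.impL[of B \<Gamma> "add_mset C \<Delta>" A] by (simp add: add_mset_commute)
next
  case (impR A \<Gamma> B \<Delta>)
  then show ?case using grz_seq.impR[of A \<Gamma> B "add_mset C \<Delta>"] by (simp add: add_mset_commute)
next
  case (refl B \<Gamma> \<Delta>)
  then show ?case using grz_seq.refl by blast
next
  case (boxGrz A \<Pi> \<Gamma> \<Delta>)
  then show ?case using grz_seq.boxGrz[of A \<Pi> \<Gamma> "add_mset C \<Delta>"] by (simp add: add_mset_commute)
qed

lemma key:
  assumes "inf_step c r ss" "\<not> grz_seq (boxes S + fst c) (snd c)"
  shows "\<exists>i S'. i < length ss \<and> \<not> grz_seq (boxes S' + fst (ss!i)) (snd (ss!i)) \<and>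
     (if r = RBox \<and> i = 1 then (\<exists>A. S' = add_mset (Imp A (Box A)) S \<and> Imp A (Box A) \<notin># S \<and> Box A \<in># snd c)
      else S' = S)"
  using assms
proof cases
  case (1 p \<Gamma> \<Delta>)
  then show ?thesis using assms(2) grz_seq.ax[of "At p" "boxes S + \<Gamma>" \<Delta>] by simp
next
  case (2 \<Gamma> \<Delta>)
  then show ?thesis using assms(2) grz_seq.bot[of "boxes S + \<Gamma>" \<Delta>] by simp
next
  case (3 A B \<Gamma> \<Delta>)
  show ?thesis
  proof (cases "grz_seq (boxes S + add_mset B \<Gamma>) \<Delta>")
    case True
    show ?thesis
    proof (cases "grz_seq (boxes S + \<Gamma>) (add_mset A \<Delta>)")
      case True2: True
      then have "grz_seq (boxes S + fst c) (snd c)"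
        using True 3 grz_seq.impL[of B "boxes S + \<Gamma>" \<Delta> A] by simp
      then show ?thesis using assms(2) by blast
    next
      case False
      then show ?thesis using 3 by (intro exI[of _ 1] exI[of _ S]) simp
    qed
  next
    case False
    then show ?thesis using 3 by (intro exI[of _ 0] exI[of _ S]) simp
  qed
next
  case (4 \<Gamma> A B \<Delta>)
  show ?thesis
  proof (cases "grz_seq (boxes S + add_mset A \<Gamma>) (add_mset B \<Delta>)")
    case True
    then have "grz_seq (boxes S + fst c) (snd c)"
      using 4 grz_seq.impR[of A "boxes S + \<Gamma>" B \<Delta>] by simp
    then show ?thesis using assms(2) by blast
  next
    case False
    then show ?thesis using 4 by (intro exI[of _ 0] exI[of _ S]) simp
  qed
next
  case (5 B \<Gamma> \<Delta>)
  show ?thesis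
  proof (cases "grz_seq (boxes S + add_mset B (add_mset (Box B) \<Gamma>)) \<Delta>")
    case True
    then have "grz_seq (boxes S + fst c) (snd c)"
      using 5 grz_seq.refl[of B "boxes S + \<Gamma>" \<Delta>] by simp
    then show ?thesis using assms(2) by blast
  next
    case False
    then show ?thesis using 5 by (intro exI[of _ 0] exI[of _ S]) simp
  qed
next
  case (6 \<Gamma> \<Pi> A \<Delta>)
  define X where "X = Imp A (Box A)"
  show ?thesis
  proof (cases "grz_seq (boxes S + (\<Gamma> + boxes \<Pi>)) (add_mset A \<Delta>)")
    case False
    then show ?thesis using 6 by (intro exI[of _ 0] exI[of _ S]) simp
  next
    case L: True
    show ?thesis
    proof (cases "X \<in># S")
      case True
      then obtain S1 where S1: "S = add_mset X S1" by (meson multi_member_split)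
      define G0 where "G0 = boxes S1 + (\<Gamma> + boxes \<Pi>)"
      have L': "grz_seq (add_mset (Box X) G0) (add_mset A \<Delta>)"
        using L S1 by (simp add: G0_def)
      have a: "grz_seq (add_mset (Box A) (add_mset (Box X) G0)) (add_mset (Box A) \<Delta>)"
        by (rule grz_seq.ax)
      have b: "grz_seq (add_mset (Box X) G0) (add_mset A (add_mset (Box A) \<Delta>))"
        using weakR[OF L', of "Box A"] by (simp add: add_mset_commute)
      have "grz_seq (add_mset X (add_mset (Box X) G0)) (add_mset (Box A) \<Delta>)"
        unfolding X_def using grz_seq.impL[OF a b] by (simp add: X_def)
      then have "grz_seq (add_mset (Box X) G0) (add_mset (Box A) \<Delta>)"
        by (rule grz_seq.refl)
      then have "grz_seq (boxes S + fst c) (snd c)"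
        using 6 S1 by (simp add: G0_def)
      then show ?thesis using assms(2) by blast
    next
      case notin: False
      show ?thesis
      proof (cases "grz_seq (boxes (add_mset X S) + boxes \<Pi>) {#A#}")
        case True
        then have "grz_seq (add_mset (Box (Imp A (Box A))) (boxes (S + \<Pi>))) {#A#}"
          by (simp add: X_def)
        from grz_seq.boxGrz[OF this, of \<Gamma> \<Delta>]
        have "grz_seq (boxes S + fst c) (snd c)"
          using 6 by (simp add: add.left_commute)
        then show ?thesis using assms(2) by blast
      next
        case False
        then show ?thesis using 6 notin
          by (intro exI[of _ 1] exI[of _ "add_mset X S"]) (auto simp: X_def)
      qed
    qed
  qed
qed

lemma inf_card:
  fixes g :: "nat \<Rightarrow> nat"
  assumes mono: "\<And>n. g n \<le> g (Suc n)"
    and inf: "\<exists>\<^sub>\<infinity>n. E n" and E: "\<And>n. E n \<Longrightarrow> g n < g (Suc n)"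
  shows "\<exists>n. g n \<ge> k"
proof (induction k)
  case 0 then show ?case by auto
next
  case (Suc k)
  then obtain n where n: "g n \<ge> k" by blast
  have "\<forall>N. \<exists>m\<ge>N. E m" using inf by (simp add: cofinite_eq_sequentially frequently_sequentially)
  then obtain m where m: "m \<ge> n" "E m" by blast
  have "g n \<le> g m" using lift_Suc_mono_le[of g, OF mono m(1)] by simp
  then have "g (Suc m) \<ge> Suc k" using E[OF m(2)] n by simp
  then show ?case by blast
qed

theorem theorem3p6:
  fixes \<Gamma> \<Delta> :: "'a fm multiset"
  assumes "grz_inf_provable \<Gamma> \<Delta>"
  shows "grz_seq \<Gamma> \<Delta>"
proof (rule ccontr)
  assume nprov: "\<not> grz_seq \<Gamma> \<Delta>"
  from assms obtain T lab rl where ip: "inf_proof T lab rl" and root: "lab [] = (\<Gamma>, \<Delta>)"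
    unfolding grz_inf_provable_def by blast
  have loc: "\<forall>w\<in>T. \<exists>ss. inf_step (lab w) (rl w) ss \<and>
                 (\<forall>i. w @ [i] \<in> T \<longleftrightarrow> i < length ss) \<and>
                 (\<forall>i < length ss. lab (w @ [i]) = ss ! i)"
    using ip unfolding inf_proof_def by blast
  have infb: "\<And>f :: nat \<Rightarrow> nat list. f 0 = [] \<Longrightarrow> (\<forall>n. f (Suc n) \<in> T \<and> (\<exists>i. f (Suc n) = f n @ [i]))
        \<Longrightarrow> (\<exists>\<^sub>\<infinity>n. rl (f n) = RBox \<and> f (Suc n) = f n @ [1])"
    using ip unfolding inf_proof_def by blast
  define R where "R = \<Union>(sub ` fmls (\<Gamma>, \<Delta>))"
  have Rcl: "\<Union>(sub ` X) \<subseteq> R" if "X \<subseteq> R" for X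
    using that sub_trans unfolding R_def by blast
  define F0 where "F0 = (\<lambda>A. Imp A (Box A)) ` (Box -` R)"
  have finR: "finite R" unfolding R_def fmls_def by (simp add: sub_finite)
  have finF0: "finite F0" unfolding F0_def
    by (rule finite_imageI, rule finite_vimageI[OF finR]) (simp add: inj_def)
  define Pinv where "Pinv = (\<lambda>(w, S). w \<in> T \<and> \<not> grz_seq (boxes S + fst (lab w)) (snd (lab w))
      \<and> fmls (lab w) \<subseteq> R \<and> set_mset S \<subseteq> F0)"
  define Q where "Q = (\<lambda>(w::nat list, S::'a fm multiset) (w', S').
      (\<exists>i. w' = w @ [i] \<and> (rl w = RBox \<and> i = 1 \<longrightarrow> set_mset S \<subset> set_mset S'))
       \<and> set_mset S \<subseteq> set_mset S')"
  have P0: "Pinv ([], {#})"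
    unfolding Pinv_def using ip nprov root unfolding inf_proof_def
    by (auto simp: R_def fmls_def)
  have stepP: "\<exists>y. Pinv y \<and> Q x y" if "Pinv x" for x
  proof -
    obtain w S where x: "x = (w, S)" by fastforce
    have wT: "w \<in> T" and np: "\<not> grz_seq (boxes S + fst (lab w)) (snd (lab w))"
      and fR: "fmls (lab w) \<subseteq> R" and SF: "set_mset S \<subseteq> F0"
      using that unfolding x Pinv_def by auto
    obtain ss where st: "inf_step (lab w) (rl w) ss" and ch: "\<forall>i. w @ [i] \<in> T \<longleftrightarrow> i < length ss"
      and lb: "\<forall>i < length ss. lab (w @ [i]) = ss ! i"
      using loc wT by blast
    obtain i S' where i: "i < length ss" and np': "\<not> grz_seq (boxes S' + fst (ss!i)) (snd (ss!i))"
      and cs: "if rl w = RBox \<and> i = 1 then (\<exists>A. S' = add_mset (Imp A (Box A)) S \<and> Imp A (Box A) \<notin># S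
           \<and> Box A \<in># snd (lab w)) else S' = S"
      using key[OF st np] by blast
    have fR': "fmls (lab (w @ [i])) \<subseteq> R"
      using step_sub[OF st i] lb i Rcl[OF fR] by auto
    have "Pinv (w @ [i], S') \<and> Q x (w @ [i], S')"
    proof (cases "rl w = RBox \<and> i = 1")
      case True
      then obtain A where A: "S' = add_mset (Imp A (Box A)) S" "Imp A (Box A) \<notin># S"
        "Box A \<in># snd (lab w)" using cs by auto
      have "Box A \<in> R" using A(3) fR unfolding fmls_def by auto
      then have "Imp A (Box A) \<in> F0" unfolding F0_def by auto
      then show ?thesis using A SF fR' np' i lb ch unfolding Pinv_def Q_def x by auto
    next
      case False
      then have "S' = S" using cs by auto
      then show ?thesis using False SF fR' np' i lb ch unfolding Pinv_def Q_def x by auto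
    qed
    then show ?thesis by blast
  qed
  obtain st where st: "\<forall>n. (Pinv (st n) \<and> (n = 0 \<longrightarrow> st n = ([], {#}))) \<and> Q (st n) (st (Suc n))"
    using dependent_nat_choice[of "\<lambda>n x. Pinv x \<and> (n = 0 \<longrightarrow> x = ([], {#}))" "\<lambda>_. Q"] P0 stepP
    by (metis nat.distinct(1))
  define f where "f = (\<lambda>n. fst (st n))"
  define g where "g = (\<lambda>n. card (set_mset (snd (st n))))"
  have f0: "f 0 = []" using st unfolding f_def by auto
  have fs: "\<forall>n. f (Suc n) \<in> T \<and> (\<exists>i. f (Suc n) = f n @ [i])"
  proof
    fix n
    have "Pinv (st (Suc n))" "Q (st n) (st (Suc n))" using st by auto
    then show "f (Suc n) \<in> T \<and> (\<exists>i. f (Suc n) = f n @ [i])"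
      unfolding f_def Pinv_def Q_def by (auto split: prod.splits)
  qed
  have ev: "\<exists>\<^sub>\<infinity>n. rl (f n) = RBox \<and> f (Suc n) = f n @ [1]"
    by (rule infb[OF f0 fs])
  have SF: "set_mset (snd (st n)) \<subseteq> F0" for n
  proof -
    have "Pinv (st n)" using st by blast
    then show ?thesis by (cases "st n") (auto simp: Pinv_def)
  qed
  have gmono: "g n \<le> g (Suc n)" for n
  proof -
    have q: "Q (st n) (st (Suc n))" using st by blast
    have "set_mset (snd (st n)) \<subseteq> set_mset (snd (st (Suc n)))"
      using q by (cases "st n"; cases "st (Suc n)") (auto simp: Q_def)
    then show ?thesis unfolding g_def by (simp add: card_mono)
  qed
  have gE: "g n < g (Suc n)" if "rl (f n) = RBox \<and> f (Suc n) = f n @ [1]" for n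
  proof -
    have q: "Q (st n) (st (Suc n))" using st by blast
    have "set_mset (snd (st n)) \<subset> set_mset (snd (st (Suc n)))"
      using q that by (cases "st n"; cases "st (Suc n)") (auto simp: Q_def f_def)
    then show ?thesis unfolding g_def by (simp add: psubset_card_mono)
  qed
  obtain n where "g n \<ge> Suc (card F0)"
    using inf_card[of g, OF gmono ev gE] by blast
  moreover have "g n \<le> card F0" unfolding g_def using SF finF0 by (simp add: card_mono)
  ultimately show False by simp
qed

end
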